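(* Let $(X,T)$ be a minimal topological dynamical system with $X$ compact metrisable and $T$ abelian, with maximal equicontinuous factor map $\pi:X\to X_{max}$, and let $e$ be a minimal idempotent of its Ellis semigroup $E$. Let $s:X_{max}\to{\mathcal H}_e$ be a map with $ev_0\circ\pi_*\circ s={\mathrm{id}}$ and $s\circ\delta^t=\alpha^t\circ s$ for all $t\in T$. Let $f\in K_e$ with $f\neq e$ and let $a\in X_{max}$. Then $\mathrm{supp}(s(a)fs(a)^{-1})=\mathrm{supp}(f)+a$, where $s(a)^{-1}$ is the inverse in ${\mathcal H}_e$.
   Context: $T$ acts on $X$ by homeomorphisms $\alpha^t$. $E$ is the closure of $\{\alpha^t\}$ in $X^X$ (pointwise convergence, composition as product); minimal idempotents are idempotents of its smallest two-sided ideal. ${\mathcal H}_e=eEe$ is the structure group, a group with identity $e$. Since $(X,T)$ is minimal and $T$ abelian, $X_{max}$ is a compact abelian group (written additively, neutral element $0$) on which $T$ acts by translations $\delta^t$; its Ellis semigroup $E(X_{max})$ is a group and evaluation at $0$, $ev_0:E(X_{max})\to X_{max}$, is an isomorphism. $\pi_*:E(X)\to E(X_{max})$ is the induced epimorphism $\pi_*(g)(\pi(x))=\pi(g(x))$. $K_e$ is the subgroup of ${\mathcal H}_e$ of elements $g$ preserving the fibres of $\pi$ (i.e. $\pi(g(x))=\pi(x)$ for all $x$). For $g\in{\mathcal H}_e$, $g$ acts trivially at $\xi\in X_{max}$ if all points of $e(\pi^{-1}(\xi))$ are fixed by $g$, and $\mathrm{supp}(g)$ is the set of points at which $g$ does not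 act trivially. *)

theory Defs
  imports "HOL-Analysis.Analysis"
begin

definition action_by_homeos :: "('t::ab_group_add \<Rightarrow> 'a::topological_space \<Rightarrow> 'a) \<Rightarrow> bool" where
  "action_by_homeos \<alpha> \<longleftrightarrow> \<alpha> 0 = id \<and> (\<forall>s t. \<alpha> (s + t) = \<alpha> s \<circ> \<alpha> t)
     \<and> (\<forall>t. continuous_on UNIV (\<alpha> t))"

definition minimal_system :: "('t \<Rightarrow> 'a::topological_space \<Rightarrow> 'a) \<Rightarrow> bool" where
  "minimal_system \<alpha> \<longleftrightarrow> (\<forall>x. closure (range (\<lambda>t. \<alpha> t x)) = UNIV)"

definition equicontinuous_family :: "'b::metric_space set \<Rightarrow> ('t \<Rightarrow> 'b \<Rightarrow> 'b) \<Rightarrow> bool" where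
  "equicontinuous_family Y \<beta> \<longleftrightarrow> (\<forall>\<epsilon>>0. \<exists>\<delta>>0. \<forall>y\<in>Y. \<forall>y'\<in>Y.
      dist y y' < \<delta> \<longrightarrow> (\<forall>t. dist (\<beta> t y) (\<beta> t y') < \<epsilon>))"

definition factor_map :: "('t \<Rightarrow> 'a::topological_space \<Rightarrow> 'a) \<Rightarrow> ('a \<Rightarrow> 'b::topological_space)
     \<Rightarrow> 'b set \<Rightarrow> ('t \<Rightarrow> 'b \<Rightarrow> 'b) \<Rightarrow> bool" where
  "factor_map \<alpha> \<phi> Y \<beta> \<longleftrightarrow> continuous_on UNIV \<phi> \<and> range \<phi> = Y \<and> (\<forall>t x. \<phi> (\<alpha> t x) = \<beta> t (\<phi> x))"

text \<open>Maximality: every equicontinuous factor (realised, up to conjugacy, inside the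
  metrisable space nat \<Rightarrow> real, which contains copies of all compact metrisable spaces)
  factors through pi.\<close>
definition max_equicontinuous_factor ::
  "('t \<Rightarrow> 'a::topological_space \<Rightarrow> 'a) \<Rightarrow> ('a \<Rightarrow> 'b::{ab_group_add,topological_group_add,metric_space})
    \<Rightarrow> ('t \<Rightarrow> 'b) \<Rightarrow> bool" where
  "max_equicontinuous_factor \<alpha> \<pi> \<tau> \<longleftrightarrow>
     compact (UNIV :: 'b set)
   \<and> factor_map \<alpha> \<pi> UNIV (\<lambda>t \<xi>. \<xi> + \<tau> t)
   \<and> equicontinuous_family UNIV (\<lambda>t \<xi>. \<xi> + \<tau> t)
   \<and> (\<forall>(Y :: (nat \<Rightarrow> real) set) \<phi> \<beta>. factor_map \<alpha> \<phi> Y \<beta> \<and> equicontinuous_family Y \<beta>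
        \<longrightarrow> (\<exists>\<psi>. continuous_on UNIV \<psi> \<and> \<phi> = \<psi> \<circ> \<pi>))"

definition delta :: "('t \<Rightarrow> 'b::ab_group_add) \<Rightarrow> 't \<Rightarrow> 'b \<Rightarrow> 'b" where
  "delta \<tau> t \<xi> = \<xi> + \<tau> t"

text \<open>Ellis semigroup: closure of the maps alpha^t in X^X (pointwise convergence);
  product is composition.\<close>
definition ellis :: "('t \<Rightarrow> 'a::topological_space \<Rightarrow> 'a) \<Rightarrow> ('a \<Rightarrow> 'a) set" where
  "ellis \<alpha> = closure (range \<alpha>)"

definition two_sided_ideal :: "('a \<Rightarrow> 'a) set \<Rightarrow> ('a \<Rightarrow> 'a) set \<Rightarrow> bool" where
  "two_sided_ideal E I \<longleftrightarrow> I \<noteq> {} \<and> I \<subseteq> E \<and> (\<forall>g\<in>E. \<forall>i\<in>I. g \<circ> i \<in> I \<and> i \<circ> g \<in> I)"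

definition min_ideal :: "('a \<Rightarrow> 'a) set \<Rightarrow> ('a \<Rightarrow> 'a) set" where
  "min_ideal E = \<Inter> {I. two_sided_ideal E I}"

definition minimal_idempotent :: "('t \<Rightarrow> 'a::topological_space \<Rightarrow> 'a) \<Rightarrow> ('a \<Rightarrow> 'a) \<Rightarrow> bool" where
  "minimal_idempotent \<alpha> e \<longleftrightarrow> e \<in> min_ideal (ellis \<alpha>) \<and> e \<circ> e = e"

definition struct_group :: "('t \<Rightarrow> 'a::topological_space \<Rightarrow> 'a) \<Rightarrow> ('a \<Rightarrow> 'a) \<Rightarrow> ('a \<Rightarrow> 'a) set" where
  "struct_group \<alpha> e = {e \<circ> g \<circ> e | g. g \<in> ellis \<alpha>}"

definition H_inv :: "('t \<Rightarrow> 'a::topological_space \<Rightarrow> 'a) \<Rightarrow> ('a \<Rightarrow> 'a) \<Rightarrow> ('a \<Rightarrow> 'a) \<Rightarrow> ('a \<Rightarrow> 'a)" where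
  "H_inv \<alpha> e g = (THE h. h \<in> struct_group \<alpha> e \<and> g \<circ> h = e \<and> h \<circ> g = e)"

text \<open>pi_* : E(X) \<rightarrow> E(X_max), pi_*(g)(pi x) = pi (g x).\<close>
definition pi_star :: "('a \<Rightarrow> 'b) \<Rightarrow> ('a \<Rightarrow> 'a) \<Rightarrow> ('b \<Rightarrow> 'b)" where
  "pi_star \<pi> g = (\<lambda>\<xi>. \<pi> (g (SOME x. \<pi> x = \<xi>)))"

definition ev0 :: "('b::zero \<Rightarrow> 'b) \<Rightarrow> 'b" where
  "ev0 F = F 0"

definition K_group :: "('t \<Rightarrow> 'a::topological_space \<Rightarrow> 'a) \<Rightarrow> ('a \<Rightarrow> 'b) \<Rightarrow> ('a \<Rightarrow> 'a) \<Rightarrow> ('a \<Rightarrow> 'a) set" where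
  "K_group \<alpha> \<pi> e = {g \<in> struct_group \<alpha> e. \<forall>x. \<pi> (g x) = \<pi> x}"

definition acts_trivially_at :: "('a \<Rightarrow> 'b) \<Rightarrow> ('a \<Rightarrow> 'a) \<Rightarrow> ('a \<Rightarrow> 'a) \<Rightarrow> 'b \<Rightarrow> bool" where
  "acts_trivially_at \<pi> e g \<xi> \<longleftrightarrow> (\<forall>y \<in> e ` (\<pi> -` {\<xi>}). g y = y)"

definition supp :: "('a \<Rightarrow> 'b) \<Rightarrow> ('a \<Rightarrow> 'a) \<Rightarrow> ('a \<Rightarrow> 'a) \<Rightarrow> 'b set" where
  "supp \<pi> e g = {\<xi>. \<not> acts_trivially_at \<pi> e g \<xi>}"

end

theory Submission
  imports Defs
begin

lemma compact_closed_fun: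
  assumes "compact (K :: ('a \<Rightarrow> 'b::metric_space) set)"
  shows "closed K"
proof -
  have H: "Hausdorff_space (euclidean :: ('a \<Rightarrow> 'b) topology)"
  proof -
    have "Hausdorff_space (product_topology (\<lambda>i::'a. euclidean :: 'b topology) UNIV)"
      unfolding Hausdorff_space_product_topology by simp
    then show ?thesis by (simp only: euclidean_product_topology)
  qed
  have "compactin euclidean K" using assms by simp
  then have "closedin euclidean K" using compactin_imp_closedin[OF H] by blast
  then show ?thesis by (simp only: closed_closedin)
qed

lemma cont_rmult: "continuous_on UNIV (\<lambda>k::'a\<Rightarrow>'b::topological_space. k \<circ> x)"
  by (rule continuous_on_coordinatewise_then_product) simp

lemma cont_lmult:
  assumes "continuous_on UNIV (h::'b::topological_space \<Rightarrow> 'b)"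
  shows "continuous_on UNIV (\<lambda>k::'a\<Rightarrow>'b. h \<circ> k)"
proof (rule continuous_on_coordinatewise_then_product)
  fix i
  show "continuous_on UNIV (\<lambda>k::'a\<Rightarrow>'b. (h \<circ> k) i)"
    using continuous_on_compose2[OF assms continuous_on_product_coordinates[of i]] by simp
qed

lemma compact_fun_UNIV:
  assumes "compact (UNIV :: 'b::topological_space set)"
  shows "compact (UNIV :: ('a \<Rightarrow> 'b) set)"
proof -
  have "compact_space (euclidean :: 'b topology)"
    using assms by (simp add: compact_space_def)
  then have "compact_space (product_topology (\<lambda>i::'a. euclidean :: 'b topology) UNIV)"
    by (simp add: compact_space_product_topology)
  then have "compact_space (euclidean :: ('a \<Rightarrow> 'b) topology)"
    by (simp add: euclidean_product_topology)
  then show ?thesis by (simp add: compact_space_def)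
qed

definition lideal :: "('a \<Rightarrow> 'a) set \<Rightarrow> ('a \<Rightarrow> 'a) set \<Rightarrow> bool" where
  "lideal S L \<longleftrightarrow> L \<noteq> {} \<and> L \<subseteq> S \<and> (\<forall>g\<in>S. \<forall>l\<in>L. g \<circ> l \<in> L)"

lemma exists_min_lideal:
  fixes S :: "('a::metric_space \<Rightarrow> 'a) set"
  assumes cS: "compact S" and neS: "S \<noteq> {}" and mS: "\<forall>g\<in>S. \<forall>h\<in>S. g \<circ> h \<in> S"
  shows "\<exists>L. lideal S L \<and> (\<forall>J. lideal S J \<and> J \<subseteq> L \<longrightarrow> J = L)"
proof -
  define A where "A = {L. lideal S L \<and> closed L}"
  have "lideal S S" unfolding lideal_def using neS mS by simp
  moreover have "closed S" by (rule compact_closed_fun[OF cS])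
  ultimately have SA: "S \<in> A" unfolding A_def by simp
  have princ: "(\<lambda>k. k \<circ> x) ` S \<in> A" if xS: "x \<in> S" for x
  proof -
    have "compact ((\<lambda>k. k \<circ> x) ` S)"
      by (rule compact_continuous_image[OF continuous_on_subset[OF cont_rmult] cS]) simp
    then have "closed ((\<lambda>k. k \<circ> x) ` S)" by (rule compact_closed_fun)
    moreover have "lideal S ((\<lambda>k. k \<circ> x) ` S)"
      unfolding lideal_def
    proof (intro conjI ballI)
      show "(\<lambda>k. k \<circ> x) ` S \<noteq> {}" using neS by blast
      show "(\<lambda>k. k \<circ> x) ` S \<subseteq> S" using mS xS by blast
    next
      fix g l assume g: "g \<in> S" and l: "l \<in> (\<lambda>k. k \<circ> x) ` S"
      then obtain k where k: "k \<in> S" "l = k \<circ> x" by blast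
      then have "g \<circ> l = (g \<circ> k) \<circ> x" by (simp add: comp_assoc)
      moreover have "g \<circ> k \<in> S" using mS g k by blast
      ultimately show "g \<circ> l \<in> (\<lambda>k. k \<circ> x) ` S" by blast
    qed
    ultimately show ?thesis unfolding A_def by simp
  qed
  have "\<exists>M\<in>uminus ` A. \<forall>X\<in>uminus ` A. M \<subseteq> X \<longrightarrow> X = M"
  proof (rule subset_Zorn_nonempty)
    show "uminus ` A \<noteq> {}" using SA by blast
  next
    fix C assume Cne: "C \<noteq> {}" and ch: "subset.chain (uminus ` A) C"
    define D where "D = uminus ` C"
    have chh: "C \<subseteq> uminus ` A \<and> (\<forall>X\<in>C. \<forall>Y\<in>C. X \<subseteq> Y \<or> Y \<subseteq> X)"
      by (rule iffD1[OF subset_chain_def ch])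
    then have CA: "C \<subseteq> uminus ` A" and Cch: "\<forall>X\<in>C. \<forall>Y\<in>C. X \<subseteq> Y \<or> Y \<subseteq> X"
      by (rule conjunct1, rule conjunct2)
    have DA: "X \<in> A" if XD: "X \<in> D" for X
    proof -
      from XD obtain X' where X': "X' \<in> C" "X = - X'" unfolding D_def by (rule imageE)
      have "X' \<in> uminus ` A" using CA X'(1) by (rule subsetD)
      then obtain Y where Y: "Y \<in> A" "X' = - Y" by (rule imageE)
      show "X \<in> A" using X'(2) Y by simp
    qed
    have ADp: "lideal S T \<and> closed T" if "T \<in> D" for T
      using DA[OF that] unfolding A_def by simp
    have Dtot: "X \<subseteq> Y \<or> Y \<subseteq> X" if XD: "X \<in> D" and YD: "Y \<in> D" for X Y
    proof -
      from XD obtain X' where X': "X' \<in> C" "X = - X'" unfolding D_def by (rule imageE)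
      from YD obtain Y' where Y': "Y' \<in> C" "Y = - Y'" unfolding D_def by (rule imageE)
      have "X' \<subseteq> Y' \<or> Y' \<subseteq> X'" using Cch X'(1) Y'(1) by simp
      then show ?thesis
      proof
        assume "X' \<subseteq> Y'" then have "Y \<subseteq> X" using X'(2) Y'(2) by simp
        then show ?thesis by (rule disjI2)
      next
        assume "Y' \<subseteq> X'" then have "X \<subseteq> Y" using X'(2) Y'(2) by simp
        then show ?thesis by (rule disjI1)
      qed
    qed
    have Dne: "D \<noteq> {}" using Cne unfolding D_def by simp
    have cl: "closed (\<Inter>D)" using ADp by (intro closed_Inter) simp
    obtain T0 where T0: "T0 \<in> D" using Dne by auto
    have "T0 \<subseteq> S" using ADp[OF T0] unfolding lideal_def by simp
    then have sub: "\<Inter>D \<subseteq> S" using T0 by (meson Inter_lower subset_trans)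
    have idl: "\<forall>g\<in>S. \<forall>l\<in>\<Inter>D. g \<circ> l \<in> \<Inter>D"
    proof (intro ballI InterI)
      fix g l T assume g: "g \<in> S" and l: "l \<in> \<Inter>D" and T: "T \<in> D"
      have "l \<in> T" using l T by (rule InterD)
      moreover have "\<forall>g\<in>S. \<forall>l\<in>T. g \<circ> l \<in> T" using ADp[OF T] unfolding lideal_def by simp
      ultimately show "g \<circ> l \<in> T" using g by simp
    qed
    have "S \<inter> \<Inter>D \<noteq> {}"
    proof (rule compact_imp_fip[OF cS])
      show "closed T" if "T \<in> D" for T using ADp[OF that] by simp
    next
      fix F' assume fin: "finite F'" and F'D: "F' \<subseteq> D"
      show "S \<inter> \<Inter>F' \<noteq> {}"
      proof (cases "F' = {}")
        case True then show ?thesis using neS by simp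
      next
        case False
        have "subset.chain A F'" unfolding subset_chain_def
        proof (intro conjI ballI)
          show "F' \<subseteq> A" using F'D DA by (meson subsetD subsetI)
          fix X Y assume "X \<in> F'" "Y \<in> F'"
          then show "X \<subseteq> Y \<or> Y \<subseteq> X" using F'D Dtot by (meson subsetD)
        qed
        then have IF: "\<Inter>F' \<in> F'" by (rule Inter_in_chain[OF fin False])
        have "\<Inter>F' \<in> D" using F'D IF by (rule subsetD)
        then have "lideal S (\<Inter>F')" using ADp by simp
        then have "\<Inter>F' \<noteq> {}" "\<Inter>F' \<subseteq> S" unfolding lideal_def by simp_all
        then show ?thesis by (simp add: Int_absorb1)
      qed
    qed
    then have "\<Inter>D \<noteq> {}" by (metis Int_empty_right)
    then have "lideal S (\<Inter>D)" unfolding lideal_def using sub idl by simp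
    then have IDA: "\<Inter>D \<in> A" unfolding A_def using cl by simp
    have "\<Union>C = - \<Inter>D" unfolding D_def by (simp add: uminus_Inf image_image)
    then show "\<Union>C \<in> uminus ` A" using IDA by simp
  qed
  then obtain M where M: "M \<in> uminus ` A" and Mmax: "\<forall>X\<in>uminus ` A. M \<subseteq> X \<longrightarrow> X = M"
    by (rule bexE)
  from M obtain L where LA: "L \<in> A" and Mc: "M = - L" by (rule imageE)
  have Lmin: "X = L" if XA: "X \<in> A" and XL: "X \<subseteq> L" for X
  proof -
    have i1: "- X \<in> uminus ` A" using XA by (rule imageI)
    have i2: "M \<subseteq> - X" using XL Mc by (simp add: Compl_subset_Compl_iff)
    have "- X = M" by (rule Mmax[rule_format, OF i1 i2])
    then show "X = L" using Mc by simp
  qed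
  have LL: "lideal S L" using LA unfolding A_def by simp
  have "J = L" if J: "lideal S J" "J \<subseteq> L" for J
  proof -
    have Jne: "J \<noteq> {}" and JS: "J \<subseteq> S" and Jid: "\<forall>g\<in>S. \<forall>l\<in>J. g \<circ> l \<in> J"
      using J(1) unfolding lideal_def by simp_all
    from Jne obtain x where xJ: "x \<in> J" by auto
    have xS: "x \<in> S" using JS xJ by (rule subsetD)
    have sub: "(\<lambda>k. k \<circ> x) ` S \<subseteq> J"
    proof
      fix z assume "z \<in> (\<lambda>k. k \<circ> x) ` S"
      then obtain k where "k \<in> S" "z = k \<circ> x" by (rule imageE)
      then show "z \<in> J" using Jid xJ by simp
    qed
    have "(\<lambda>k. k \<circ> x) ` S \<subseteq> L" using sub J(2) by (rule subset_trans)
    then have "(\<lambda>k. k \<circ> x) ` S = L" by (rule Lmin[OF princ[OF xS]])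
    then have "L \<subseteq> J" using sub by simp
    then show "J = L" using J(2) by (rule subset_antisym[rotated])
  qed
  then show ?thesis using LL by blast
qed

lemma group_lemma:
  fixes S :: "('a::metric_space \<Rightarrow> 'a) set"
  assumes cS: "compact S" and neS: "S \<noteq> {}" and mS: "\<forall>g\<in>S. \<forall>h\<in>S. g \<circ> h \<in> S"
    and eM: "e \<in> min_ideal S" and ee: "e \<circ> e = e"
    and x: "x \<in> S" and ex: "e \<circ> x = x" and xe: "x \<circ> e = x"
  shows "\<exists>y\<in>S. y \<circ> x = e"
proof -
  obtain L where L: "lideal S L" and Lmin: "\<forall>J. lideal S J \<and> J \<subseteq> L \<longrightarrow> J = L"
    using exists_min_lideal[OF cS neS mS] by blast
  define I where "I = {l \<circ> t | l t. l \<in> L \<and> t \<in> S}"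
  have "two_sided_ideal S I"
    unfolding two_sided_ideal_def I_def
  proof (intro conjI ballI)
    obtain l0 where l0: "l0 \<in> L" using L unfolding lideal_def by blast
    obtain t0 where t0: "t0 \<in> S" using neS by blast
    have "l0 \<circ> t0 \<in> {l \<circ> t |l t. l \<in> L \<and> t \<in> S}" using l0 t0 by blast
    then show "{l \<circ> t |l t. l \<in> L \<and> t \<in> S} \<noteq> {}" by blast
    have LS: "L \<subseteq> S" using L unfolding lideal_def by blast
    show "{l \<circ> t |l t. l \<in> L \<and> t \<in> S} \<subseteq> S"
    proof
      fix z assume "z \<in> {l \<circ> t |l t. l \<in> L \<and> t \<in> S}"
      then obtain l t where "z = l \<circ> t" "l \<in> L" "t \<in> S" by blast
      then show "z \<in> S" using LS mS by blast
    qed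
  next
    fix g i assume g: "g \<in> S" and i: "i \<in> {l \<circ> t |l t. l \<in> L \<and> t \<in> S}"
    then obtain l t where lt: "i = l \<circ> t" "l \<in> L" "t \<in> S" by blast
    have gl: "g \<circ> l \<in> L" using L g lt unfolding lideal_def by blast
    have "g \<circ> i = (g \<circ> l) \<circ> t" using lt by (simp add: comp_assoc)
    then show "g \<circ> i \<in> {l \<circ> t |l t. l \<in> L \<and> t \<in> S}" using gl lt by blast
    have tg: "t \<circ> g \<in> S" using mS g lt by blast
    have "i \<circ> g = l \<circ> (t \<circ> g)" using lt by (simp add: comp_assoc)
    then show "i \<circ> g \<in> {l \<circ> t |l t. l \<in> L \<and> t \<in> S}" using tg lt by blast
  qed
  then have "e \<in> I" using eM unfolding min_ideal_def by blast
  then obtain l t where lt: "e = l \<circ> t" "l \<in> L" "t \<in> S" unfolding I_def by blast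
  define c where "c = t \<circ> e"
  have elc: "e = l \<circ> c"
  proof -
    have "l \<circ> c = (l \<circ> t) \<circ> e" by (simp add: c_def comp_assoc)
    also have "\<dots> = e \<circ> e" using lt(1) by simp
    also have "\<dots> = e" by (rule ee)
    finally show ?thesis by simp
  qed
  define J where "J = {k \<in> L. k \<circ> c \<in> (\<lambda>y. y \<circ> x) ` S}"
  have eS: "e \<in> S" using \<open>two_sided_ideal S I\<close> \<open>e \<in> I\<close> unfolding two_sided_ideal_def by blast
  have xl: "x \<circ> l \<in> L" using L x lt unfolding lideal_def by blast
  have "(x \<circ> l) \<circ> c = x \<circ> (l \<circ> c)" by (simp add: comp_assoc)
  also have "\<dots> = e \<circ> x" using elc[symmetric] xe ex by simp
  finally have "(x \<circ> l) \<circ> c \<in> (\<lambda>y. y \<circ> x) ` S" using eS by (metis image_eqI)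
  then have "x \<circ> l \<in> J" using xl by (simp add: J_def)
  have "lideal S J" unfolding lideal_def
  proof (intro conjI ballI)
    show "J \<noteq> {}" using \<open>x \<circ> l \<in> J\<close> by blast
    show "J \<subseteq> S" using L unfolding J_def lideal_def by blast
  next
    fix g k assume g: "g \<in> S" and k: "k \<in> J"
    then obtain y where y: "y \<in> S" "k \<circ> c = y \<circ> x" "k \<in> L" unfolding J_def by blast
    have "g \<circ> k \<in> L" using L g y unfolding lideal_def by blast
    moreover have gy: "(g \<circ> k) \<circ> c = (g \<circ> y) \<circ> x" using y by (simp add: comp_assoc)
    moreover have "g \<circ> y \<in> S" using mS g y by blast
    then have "(g \<circ> k) \<circ> c \<in> (\<lambda>y. y \<circ> x) ` S" unfolding image_iff using gy by blast
    ultimately show "g \<circ> k \<in> J" unfolding J_def by blast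
  qed
  moreover have "J \<subseteq> L" unfolding J_def by blast
  ultimately have "J = L" using Lmin by blast
  then have "l \<in> J" using lt by simp
  then obtain y where "y \<in> S" "l \<circ> c = y \<circ> x" by (auto simp: J_def)
  then show ?thesis using elc by metis
qed

lemma group_inv:
  fixes S :: "('a::metric_space \<Rightarrow> 'a) set"
  assumes cS: "compact S" and neS: "S \<noteq> {}" and mS: "\<forall>g\<in>S. \<forall>h\<in>S. g \<circ> h \<in> S"
    and eM: "e \<in> min_ideal S" and ee: "e \<circ> e = e" and eS: "e \<in> S"
    and x: "x \<in> {e \<circ> g \<circ> e | g. g \<in> S}"
  shows "\<exists>!h. h \<in> {e \<circ> g \<circ> e | g. g \<in> S} \<and> x \<circ> h = e \<and> h \<circ> x = e"
proof -
  let ?H = "{e \<circ> g \<circ> e | g. g \<in> S}"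
  have Hprop: "k \<in> S \<and> e \<circ> k = k \<and> k \<circ> e = k" if "k \<in> ?H" for k
  proof -
    from that obtain g where g: "k = e \<circ> g \<circ> e" "g \<in> S" by blast
    have ee': "e \<circ> (e \<circ> X) = e \<circ> X" for X by (simp add: comp_assoc[symmetric] ee)
    have "k \<in> S" using g mS eS by blast
    moreover have "e \<circ> k = k" using g by (simp add: comp_assoc ee')
    moreover have "k \<circ> e = k" using g by (simp add: comp_assoc ee)
    ultimately show ?thesis by blast
  qed
  have linv: "\<exists>h\<in>?H. h \<circ> k = e" if k: "k \<in> ?H" for k
  proof -
    have kp: "k \<in> S" "e \<circ> k = k" "k \<circ> e = k" using Hprop[OF k] by auto
    obtain y where y: "y \<in> S" "y \<circ> k = e"
      using group_lemma[OF cS neS mS eM ee kp] by blast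
    have "e \<circ> y \<circ> e \<in> ?H" using y by blast
    moreover have "(e \<circ> y \<circ> e) \<circ> k = e" using y kp ee by (simp add: comp_assoc)
    ultimately show ?thesis by blast
  qed
  obtain h where h: "h \<in> ?H" "h \<circ> x = e" using linv[OF x] by blast
  obtain h' where h': "h' \<in> ?H" "h' \<circ> h = e" using linv[OF h(1)] by blast
  have "e \<circ> (x \<circ> h) = (e \<circ> x) \<circ> h" by (simp add: comp_assoc)
  then have "x \<circ> h = e \<circ> (x \<circ> h)" using Hprop[OF x] by simp
  also have "\<dots> = (h' \<circ> h) \<circ> (x \<circ> h)" using h' by simp
  also have "\<dots> = h' \<circ> (h \<circ> x) \<circ> h" by (simp add: comp_assoc)
  also have "\<dots> = h' \<circ> h" using h Hprop[OF h'(1)] by (simp add: comp_assoc)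
  also have "\<dots> = e" using h' by simp
  finally have xh: "x \<circ> h = e" .
  show ?thesis
  proof (rule ex1I[of _ h])
    show "h \<in> ?H \<and> x \<circ> h = e \<and> h \<circ> x = e" using h xh by blast
  next
    fix h2 assume h2: "h2 \<in> ?H \<and> x \<circ> h2 = e \<and> h2 \<circ> x = e"
    have "h2 = h2 \<circ> e" using Hprop[of h2] h2 by simp
    also have "\<dots> = (h2 \<circ> x) \<circ> h" using xh by (simp add: comp_assoc)
    also have "\<dots> = e \<circ> h" using h2 by simp
    also have "\<dots> = h" using Hprop[OF h(1)] by simp
    finally show "h2 = h" .
  qed
qed


lemma ellis_props:
  fixes \<alpha> :: "'t::ab_group_add \<Rightarrow> 'a::metric_space \<Rightarrow> 'a"
  assumes act: "action_by_homeos \<alpha>" and cX: "compact (UNIV :: 'a set)"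
  shows "compact (ellis \<alpha>)" "ellis \<alpha> \<noteq> {}" "\<forall>g\<in>ellis \<alpha>. \<forall>h\<in>ellis \<alpha>. g \<circ> h \<in> ellis \<alpha>"
    "\<And>t. \<alpha> t \<in> ellis \<alpha>"
proof -
  have add: "\<And>s t. \<alpha> (s + t) = \<alpha> s \<circ> \<alpha> t" and cont: "\<And>t. continuous_on UNIV (\<alpha> t)"
    using act unfolding action_by_homeos_def by simp_all
  have "compact (closure (range \<alpha>) \<inter> UNIV)"
    by (rule closed_Int_compact[OF closed_closure compact_fun_UNIV[OF cX]])
  then show "compact (ellis \<alpha>)" unfolding ellis_def by simp
  show al: "\<alpha> t \<in> ellis \<alpha>" for t unfolding ellis_def
    by (rule subsetD[OF closure_subset rangeI])
  then show "ellis \<alpha> \<noteq> {}" by (metis empty_iff)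
  have step1: "\<alpha> t \<circ> k \<in> ellis \<alpha>" if k: "k \<in> ellis \<alpha>" for t k
  proof -
    have "(\<lambda>k. \<alpha> t \<circ> k) ` closure (range \<alpha>) \<subseteq> closure (range \<alpha>)"
    proof (rule image_closure_subset)
      show "continuous_on (closure (range \<alpha>)) (\<lambda>k. \<alpha> t \<circ> k)"
        by (rule continuous_on_subset[OF cont_lmult[OF cont[of t]] subset_UNIV])
      show "closed (closure (range \<alpha>))" by simp
      show "(\<lambda>k. \<alpha> t \<circ> k) ` range \<alpha> \<subseteq> closure (range \<alpha>)"
      proof
        fix z assume "z \<in> (\<lambda>k. \<alpha> t \<circ> k) ` range \<alpha>"
        then obtain u where "z = \<alpha> t \<circ> \<alpha> u" by blast
        then have "z = \<alpha> (t + u)" by (simp only: add)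
        then have "z \<in> range \<alpha>" by simp
        then show "z \<in> closure (range \<alpha>)" using closure_subset by (rule subsetD[rotated])
      qed
    qed
    then show ?thesis using k unfolding ellis_def by (rule subsetD[OF _ imageI])
  qed
  show "\<forall>g\<in>ellis \<alpha>. \<forall>h\<in>ellis \<alpha>. g \<circ> h \<in> ellis \<alpha>"
  proof (intro ballI)
    fix g h assume g: "g \<in> ellis \<alpha>" and h: "h \<in> ellis \<alpha>"
    have "(\<lambda>k. k \<circ> h) ` closure (range \<alpha>) \<subseteq> closure (range \<alpha>)"
    proof (rule image_closure_subset)
      show "continuous_on (closure (range \<alpha>)) (\<lambda>k. k \<circ> h)"
        by (rule continuous_on_subset[OF cont_rmult subset_UNIV])
      show "closed (closure (range \<alpha>))" by simp
      show "(\<lambda>k. k \<circ> h) ` range \<alpha> \<subseteq> closure (range \<alpha>)"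
      proof
        fix z assume "z \<in> (\<lambda>k. k \<circ> h) ` range \<alpha>"
        then obtain u where "z = \<alpha> u \<circ> h" by blast
        then show "z \<in> closure (range \<alpha>)" using step1[OF h] unfolding ellis_def by simp
      qed
    qed
    then show "g \<circ> h \<in> ellis \<alpha>" using g unfolding ellis_def by (rule subsetD[OF _ imageI])
  qed
qed

lemma cont_ev:
  assumes "continuous_on UNIV (\<pi> :: 'a::topological_space \<Rightarrow> 'b::topological_space)"
  shows "continuous_on UNIV (\<lambda>g::'c \<Rightarrow> 'a. \<pi> (g x))"
  using continuous_on_compose2[OF assms continuous_on_product_coordinates[of x]] by simp

lemma ellis_pi:
  fixes \<alpha> :: "'t::ab_group_add \<Rightarrow> 'a::metric_space \<Rightarrow> 'a"
    and \<pi> :: "'a \<Rightarrow> 'b::{ab_group_add,topological_group_add,metric_space}"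
  assumes fm: "factor_map \<alpha> \<pi> UNIV (\<lambda>t \<xi>. \<xi> + \<tau> t)" and g: "g \<in> ellis \<alpha>"
  shows "\<exists>c. \<forall>x. \<pi> (g x) = \<pi> x + c"
proof -
  have pc: "continuous_on UNIV \<pi>" and eq: "\<And>t x. \<pi> (\<alpha> t x) = \<pi> x + \<tau> t"
    using fm unfolding factor_map_def by auto
  define F where "F = (\<lambda>x y (k::'a \<Rightarrow> 'a). \<pi> (k x) - \<pi> x - (\<pi> (k y) - \<pi> y))"
  define C where "C = (\<Inter>x. \<Inter>y. F x y -` {0})"
  have clF: "closed (F x y -` {0})" for x y
  proof -
    have "continuous_on UNIV (F x y)" unfolding F_def
      by (intro continuous_on_diff continuous_on_const cont_ev[OF pc])
    then show ?thesis using continuous_on_closed_vimage[of UNIV "F x y"] by simp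
  qed
  have "closed C" unfolding C_def by (intro closed_INT ballI clF)
  moreover have "range \<alpha> \<subseteq> C"
  proof
    fix z assume "z \<in> range \<alpha>"
    then obtain t where zt: "z = \<alpha> t" by blast
    have "F x y z = 0" for x y unfolding F_def zt eq by simp
    then show "z \<in> C" unfolding C_def by simp
  qed
  ultimately have "closure (range \<alpha>) \<subseteq> C" by (rule closure_minimal[rotated])
  then have "g \<in> C" using g unfolding ellis_def by blast
  then have "F x undefined g = 0" for x unfolding C_def by simp
  then have "\<pi> (g x) = \<pi> x + (\<pi> (g undefined) - \<pi> undefined)" for x
    unfolding F_def by (simp add: algebra_simps eq_iff_diff_eq_0[symmetric])
  then show ?thesis by blast
qed

theorem mainTheorem5:
  fixes \<alpha> :: "'t::ab_group_add \<Rightarrow> 'a::metric_space \<Rightarrow> 'a"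
    and \<pi> :: "'a \<Rightarrow> 'b::{ab_group_add,topological_group_add,metric_space}"
    and \<tau> :: "'t \<Rightarrow> 'b"
    and e f :: "'a \<Rightarrow> 'a"
    and s :: "'b \<Rightarrow> ('a \<Rightarrow> 'a)"
    and a :: 'b
  assumes X_compact: "compact (UNIV :: 'a set)"
    and act: "action_by_homeos \<alpha>"
    and minimal: "minimal_system \<alpha>"
    and mef: "max_equicontinuous_factor \<alpha> \<pi> \<tau>"
    and e_min: "minimal_idempotent \<alpha> e"
    and s_in: "\<forall>\<xi>. s \<xi> \<in> struct_group \<alpha> e"
    and s_section: "\<forall>\<xi>. ev0 (pi_star \<pi> (s \<xi>)) = \<xi>"
    and s_equiv: "\<forall>t. s \<circ> delta \<tau> t = (\<lambda>\<xi>. \<alpha> t \<circ> s \<xi>)"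
    and f_K: "f \<in> K_group \<alpha> \<pi> e"
    and f_ne: "f \<noteq> e"
  shows "supp \<pi> e (s a \<circ> f \<circ> H_inv \<alpha> e (s a)) = (\<lambda>\<xi>. \<xi> + a) ` supp \<pi> e f"
proof -
  have fm: "factor_map \<alpha> \<pi> UNIV (\<lambda>t \<xi>. \<xi> + \<tau> t)"
    using mef unfolding max_equicontinuous_factor_def by simp
  have surj: "range \<pi> = UNIV" using fm unfolding factor_map_def by simp
  note EP = ellis_props[OF act X_compact]
  have T: "two_sided_ideal (ellis \<alpha>) (ellis \<alpha>)"
    unfolding two_sided_ideal_def using EP(2) EP(3) by simp
  have minE: "min_ideal (ellis \<alpha>) \<subseteq> ellis \<alpha>" unfolding min_ideal_def
    by (rule Inter_lower) (simp add: T)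
  have eM: "e \<in> min_ideal (ellis \<alpha>)" and ee: "e \<circ> e = e"
    using e_min unfolding minimal_idempotent_def by simp_all
  have eE: "e \<in> ellis \<alpha>" using minE eM by (rule subsetD)
  have ee': "e \<circ> (e \<circ> X) = e \<circ> X" for X by (simp add: comp_assoc[symmetric] ee)
  have Hprop: "k \<in> ellis \<alpha> \<and> e \<circ> k = k \<and> k \<circ> e = k" if "k \<in> struct_group \<alpha> e" for k
  proof -
    from that obtain g where g: "k = e \<circ> g \<circ> e" "g \<in> ellis \<alpha>" unfolding struct_group_def by blast
    have "e \<circ> g \<in> ellis \<alpha>" using EP(3) eE g(2) by simp
    then have "k \<in> ellis \<alpha>" using EP(3) eE g(1) by simp
    moreover have "e \<circ> k = k" using g by (simp add: comp_assoc ee')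
    moreover have "k \<circ> e = k" using g by (simp add: comp_assoc ee)
    ultimately show ?thesis by simp
  qed
  define g where "g = s a"
  have gH: "g \<in> struct_group \<alpha> e" using s_in unfolding g_def by simp
  have ex1: "\<exists>!h. h \<in> struct_group \<alpha> e \<and> g \<circ> h = e \<and> h \<circ> g = e"
    using group_inv[OF EP(1) EP(2) EP(3) eM ee eE, of g] gH unfolding struct_group_def by simp
  define h where "h = H_inv \<alpha> e g"
  have hp: "h \<in> struct_group \<alpha> e \<and> g \<circ> h = e \<and> h \<circ> g = e"
    unfolding h_def H_inv_def by (rule theI'[OF ex1])
  then have hH: "h \<in> struct_group \<alpha> e" and gh: "g \<circ> h = e" and hg: "h \<circ> g = e" by simp_all
  have fH: "f \<in> struct_group \<alpha> e" using f_K unfolding K_group_def by simp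
  have gP: "g \<in> ellis \<alpha>" "e \<circ> g = g" "g \<circ> e = g" using Hprop[OF gH] by simp_all
  have hP: "h \<in> ellis \<alpha>" "e \<circ> h = h" "h \<circ> e = h" using Hprop[OF hH] by simp_all
  have fP: "e \<circ> f = f" "f \<circ> e = f" using Hprop[OF fH] by simp_all
  obtain ce where ce: "\<And>x. \<pi> (e x) = \<pi> x + ce" using ellis_pi[OF fm eE] by blast
  obtain cg where cg: "\<And>x. \<pi> (g x) = \<pi> x + cg" using ellis_pi[OF fm gP(1)] by blast
  obtain ch where ch: "\<And>x. \<pi> (h x) = \<pi> x + ch" using ellis_pi[OF fm hP(1)] by blast
  have ce0: "ce = 0"
  proof -
    have "e (e undefined) = e undefined" using fun_cong[OF ee, of undefined] by simp
    then have "\<pi> (e (e undefined)) = \<pi> (e undefined)" by simp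
    then have "\<pi> undefined + ce + ce = \<pi> undefined + ce" by (simp only: ce)
    then show ?thesis by (simp add: add.assoc)
  qed
  have cga: "cg = a"
  proof -
    have "\<exists>x. \<pi> x = 0" using surj by (metis UNIV_I image_iff)
    then have z: "\<pi> (SOME x. \<pi> x = 0) = 0" by (rule someI_ex)
    have "ev0 (pi_star \<pi> g) = a" using s_section unfolding g_def by simp
    then have "\<pi> (g (SOME x. \<pi> x = 0)) = a" unfolding ev0_def pi_star_def by simp
    then show ?thesis using z cg by simp
  qed
  have chm: "ch = - a"
  proof -
    have "h (g undefined) = e undefined" using fun_cong[OF hg, of undefined] by simp
    then have "\<pi> (h (g undefined)) = \<pi> (e undefined)" by simp
    then have "\<pi> undefined + cg + ch = \<pi> undefined" by (simp only: cg ch ce ce0 add_0_right)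
    then have s0: "cg + ch = 0" by (simp add: add.assoc)
    have "ch = (cg + ch) - cg" by simp
    also have "\<dots> = - cg" using s0 by simp
    finally show ?thesis using cga by simp
  qed
  have pg: "\<pi> (g x) = \<pi> x + a" for x using cg cga by simp
  have ph: "\<pi> (h x) = \<pi> x - a" for x using ch chm by simp
  have eg: "e (g x) = g x" for x using fun_cong[OF gP(2), of x] by simp
  have eh: "e (h x) = h x" for x using fun_cong[OF hP(2), of x] by simp
  have hgx: "h (g x) = e x" for x using fun_cong[OF hg, of x] by simp
  have ghx: "g (h x) = e x" for x using fun_cong[OF gh, of x] by simp
  have he: "h (e x) = h x" for x using fun_cong[OF hP(3), of x] by simp
  have ef: "e (f x) = f x" for x using fun_cong[OF fP(1), of x] by simp
  have key: "acts_trivially_at \<pi> e (g \<circ> f \<circ> h) \<zeta> \<longleftrightarrow> acts_trivially_at \<pi> e f (\<zeta> - a)" for \<zeta>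
  proof
    assume A: "acts_trivially_at \<pi> e (g \<circ> f \<circ> h) \<zeta>"
    show "acts_trivially_at \<pi> e f (\<zeta> - a)" unfolding acts_trivially_at_def
    proof
      fix z assume "z \<in> e ` (\<pi> -` {\<zeta> - a})"
      then obtain x where x: "\<pi> x = \<zeta> - a" "z = e x" by blast
      have "\<pi> (g x) = \<zeta>" using pg x(1) by simp
      then have "e (g x) \<in> e ` (\<pi> -` {\<zeta>})" by blast
      then have "(g \<circ> f \<circ> h) (e (g x)) = e (g x)" using A unfolding acts_trivially_at_def by blast
      then have "g (f (e x)) = g x" by (simp add: eg hgx)
      then have "h (g (f (e x))) = h (g x)" by simp
      then have "f (e x) = e x" by (simp add: hgx ef)
      then show "f z = z" using x(2) by simp
    qed
  next
    assume A: "acts_trivially_at \<pi> e f (\<zeta> - a)"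
    show "acts_trivially_at \<pi> e (g \<circ> f \<circ> h) \<zeta>" unfolding acts_trivially_at_def
    proof
      fix z assume "z \<in> e ` (\<pi> -` {\<zeta>})"
      then obtain y where y: "\<pi> y = \<zeta>" "z = e y" by blast
      have "\<pi> (h y) = \<zeta> - a" using ph y(1) by simp
      then have "e (h y) \<in> e ` (\<pi> -` {\<zeta> - a})" by blast
      then have "f (e (h y)) = e (h y)" using A unfolding acts_trivially_at_def by blast
      then have "f (h y) = h y" by (simp add: eh)
      then have "(g \<circ> f \<circ> h) (e y) = e y" by (simp add: he ghx)
      then show "(g \<circ> f \<circ> h) z = z" using y(2) by simp
    qed
  qed
  have "supp \<pi> e (g \<circ> f \<circ> h) = (\<lambda>\<xi>. \<xi> + a) ` supp \<pi> e f"
  proof (rule set_eqI)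
    fix \<zeta>
    have "\<zeta> \<in> (\<lambda>\<xi>. \<xi> + a) ` supp \<pi> e f \<longleftrightarrow> \<zeta> - a \<in> supp \<pi> e f"
    proof
      assume "\<zeta> \<in> (\<lambda>\<xi>. \<xi> + a) ` supp \<pi> e f"
      then obtain \<xi> where "\<xi> \<in> supp \<pi> e f" "\<zeta> = \<xi> + a" by (rule imageE)
      then show "\<zeta> - a \<in> supp \<pi> e f" by simp
    next
      assume "\<zeta> - a \<in> supp \<pi> e f"
      moreover have "\<zeta> = (\<zeta> - a) + a" by simp
      ultimately show "\<zeta> \<in> (\<lambda>\<xi>. \<xi> + a) ` supp \<pi> e f" by (rule rev_image_eqI)
    qed
    then show "\<zeta> \<in> supp \<pi> e (g \<circ> f \<circ> h) \<longleftrightarrow> \<zeta> \<in> (\<lambda>\<xi>. \<xi> + a) ` supp \<pi> e f"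
      unfolding supp_def using key by simp
  qed
  then show ?thesis unfolding h_def g_def .
qed

end
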